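(* Let $n>k$ be positive integers and $\ell$ an integer with $0\le\ell\le k-1$. Then $n_{\ge 0}(G(n,k,\{\ell\}))\le n$.
   Context: For positive integers $n>k$ and $L\subseteq\{0,1,\dots,k-1\}$, the generalized Johnson graph $G(n,k,L)$ has vertex set $\binom{[n]}{k}$, with $A,B$ adjacent if and only if $|A\cap B|\notin L$. A weighted adjacency matrix of a graph $G=(V,E)$ is a Hermitian matrix indexed by $V$ with $A_{ij}\neq0$ only if $ij\in E$. For a Hermitian matrix $X$, $n_{\ge0}(X)$ is its number of nonnegative eigenvalues (with multiplicity), and $n_{\ge0}(G)$ is the minimum of $n_{\ge0}(A)$ over all weighted adjacency matrices $A$ of $G$. *)

theory Defs
  imports "Jordan_Normal_Form.Char_Poly"
begin

definition johnson_vertices :: "nat \<Rightarrow> nat \<Rightarrow> nat set set" where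
  "johnson_vertices n k = {A. A \<subseteq> {1..n} \<and> card A = k}"

definition johnson_edge :: "nat \<Rightarrow> nat \<Rightarrow> nat set \<Rightarrow> nat set \<Rightarrow> nat set \<Rightarrow> bool" where
  "johnson_edge n k L A B \<longleftrightarrow>
     A \<in> johnson_vertices n k \<and> B \<in> johnson_vertices n k \<and> A \<noteq> B \<and> card (A \<inter> B) \<notin> L"

text \<open>A fixed enumeration of a finite vertex set, used to index matrices by vertices.
  (The spectrum does not depend on the enumeration.)\<close>
definition vertex_enum :: "'v set \<Rightarrow> 'v list" where
  "vertex_enum V = (SOME xs. distinct xs \<and> set xs = V)"

definition hermitian_mat :: "complex mat \<Rightarrow> bool" where
  "hermitian_mat M \<longleftrightarrow> dim_row M = dim_col M \<and>
     (\<forall>i < dim_row M. \<forall>j < dim_row M. M $$ (i, j) = cnj (M $$ (j, i)))"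

definition weighted_adj_matrix :: "'v set \<Rightarrow> ('v \<Rightarrow> 'v \<Rightarrow> bool) \<Rightarrow> complex mat \<Rightarrow> bool" where
  "weighted_adj_matrix V E M \<longleftrightarrow>
     M \<in> carrier_mat (card V) (card V) \<and> hermitian_mat M \<and>
     (\<forall>i < card V. \<forall>j < card V.
        M $$ (i, j) \<noteq> 0 \<longrightarrow> E (vertex_enum V ! i) (vertex_enum V ! j))"

definition n_nonneg :: "complex mat \<Rightarrow> nat" where
  "n_nonneg M = (\<Sum>x \<in> {x. poly (char_poly M) x = 0 \<and> x \<in> \<real> \<and> Re x \<ge> 0}.
                   order x (char_poly M))"

definition n_nonneg_graph :: "'v set \<Rightarrow> ('v \<Rightarrow> 'v \<Rightarrow> bool) \<Rightarrow> nat" where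
  "n_nonneg_graph V E = (LEAST m. \<exists>M. weighted_adj_matrix V E M \<and> n_nonneg M = m)"

end

theory Submission imports Defs Jordan_Normal_Form.Schur_Decomposition begin

lemma sylvester_char_poly:
  fixes A :: "'a::field mat"
  assumes A: "A \<in> carrier_mat N n" and B: "B \<in> carrier_mat n N"
  shows "monom 1 n * char_poly (A*B) = monom 1 N * char_poly (B*A)"
proof -
  define Ap where "Ap = map_mat (\<lambda>a. [:a:]) A"
  define Bp where "Bp = map_mat (\<lambda>a. [:a:]) B"
  define x where "x = ([:0,1:] :: 'a poly)"
  define XN where "XN = x \<cdot>\<^sub>m 1\<^sub>m N"
  define Xn where "Xn = x \<cdot>\<^sub>m 1\<^sub>m n"
  have Ap: "Ap \<in> carrier_mat N n" and Bp: "Bp \<in> carrier_mat n N" using A B by (auto simp: Ap_def Bp_def)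
  have XN: "XN \<in> carrier_mat N N" and Xn: "Xn \<in> carrier_mat n n" by (auto simp: XN_def Xn_def)
  have neg: "map_mat (\<lambda>a. [:-a:]) M = - map_mat (\<lambda>a. [:a:]) M" for M :: "'a mat"
    by (rule eq_matI) auto
  have cpAB: "char_poly_matrix (A*B) = XN - Ap*Bp"
    unfolding char_poly_matrix_def neg map_poly_mult(1)[OF A B] XN_def x_def Ap_def Bp_def
    using A B by (subst minus_add_uminus_mat[of _ N N]) auto
  have cpBA: "char_poly_matrix (B*A) = Xn - Bp*Ap"
    unfolding char_poly_matrix_def neg map_poly_mult(1)[OF B A] Xn_def x_def Ap_def Bp_def
    using A B by (subst minus_add_uminus_mat[of _ n n]) auto
  have detX: "det XN = x ^ N" "det Xn = x ^ n" by (auto simp: XN_def Xn_def)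
  define K where "K = four_block_mat XN Ap Bp (1\<^sub>m n)"
  define L1 where "L1 = four_block_mat (1\<^sub>m N) (-Ap) (0\<^sub>m n N) Xn"
  define L2 where "L2 = four_block_mat (1\<^sub>m N) (0\<^sub>m N n) (-Bp) Xn"
  have K: "K \<in> carrier_mat (N+n) (N+n)" unfolding K_def using XN Ap Bp by auto
  have L1: "L1 \<in> carrier_mat (N+n) (N+n)" unfolding L1_def using Xn Ap by auto
  have L2: "L2 \<in> carrier_mat (N+n) (N+n)" unfolding L2_def using Xn Bp by auto
  have "L1 * K = four_block_mat (1\<^sub>m N * XN + (-Ap) * Bp) (1\<^sub>m N * Ap + (-Ap) * 1\<^sub>m n)
        (0\<^sub>m n N * XN + Xn * Bp) (0\<^sub>m n N * Ap + Xn * 1\<^sub>m n)"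
    unfolding L1_def K_def by (rule mult_four_block_mat) (use Ap Bp XN Xn in auto)
  also have "\<dots> = four_block_mat (XN - Ap*Bp) (0\<^sub>m N n) (Xn * Bp) Xn"
    using Ap Bp XN Xn by (auto simp: minus_add_uminus_mat)
  finally have L1K: "L1 * K = four_block_mat (XN - Ap*Bp) (0\<^sub>m N n) (Xn * Bp) Xn" .
  have "L2 * K = four_block_mat (1\<^sub>m N * XN + 0\<^sub>m N n * Bp) (1\<^sub>m N * Ap + 0\<^sub>m N n * 1\<^sub>m n)
        ((-Bp) * XN + Xn * Bp) ((-Bp) * Ap + Xn * 1\<^sub>m n)"
    unfolding L2_def K_def by (rule mult_four_block_mat) (use Ap Bp XN Xn in auto)
  also have "\<dots> = four_block_mat XN Ap (0\<^sub>m n N) (Xn - Bp*Ap)"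
  proof -
    have a: "Bp * XN = x \<cdot>\<^sub>m Bp" unfolding XN_def
      by (subst mult_smult_distrib[OF Bp, of _ N]) (use Bp in auto)
    have b: "Xn * Bp = x \<cdot>\<^sub>m Bp" unfolding Xn_def
      by (subst mult_smult_assoc_mat[of _ n n Bp N]) (use Bp in auto)
    have c: "(-Bp) * XN + Xn * Bp = 0\<^sub>m n N"
    proof -
      have "(-Bp) * XN = - (x \<cdot>\<^sub>m Bp)" using a Bp XN by (subst uminus_mult_left_mat) auto
      then show ?thesis unfolding b using Bp by (intro eq_matI) auto
    qed
    have d: "(-Bp) * Ap + Xn * 1\<^sub>m n = Xn - Bp*Ap"
      using Ap Bp Xn by (auto simp: add_uminus_minus_mat comm_add_mat[of _ n n])
    show ?thesis using Ap Bp XN Xn c d by auto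
  qed
  finally have L2K: "L2 * K = four_block_mat XN Ap (0\<^sub>m n N) (Xn - Bp*Ap)" .
  have "det L1 * det K = det (XN - Ap*Bp) * det Xn"
    unfolding det_mult[OF L1 K, symmetric] L1K
    by (rule det_four_block_mat_upper_right_zero) (use Ap Bp XN Xn in auto)
  moreover have "det L1 = det Xn"
    unfolding L1_def by (subst det_four_block_mat_lower_left_zero) (use Ap Bp XN Xn in auto)
  ultimately have 1: "det K = char_poly (A*B)"
    using detX unfolding char_poly_def cpAB x_def by (simp add: mult.commute)
  have "det L2 * det K = det XN * det (Xn - Bp*Ap)"
    unfolding det_mult[OF L2 K, symmetric] L2K
    by (rule det_four_block_mat_lower_left_zero) (use Ap Bp XN Xn in auto)
  moreover have "det L2 = det Xn"
    unfolding L2_def by (subst det_four_block_mat_upper_right_zero) (use Ap Bp XN Xn in auto)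
  ultimately have "x ^ n * det K = x ^ N * char_poly (B*A)"
    using detX unfolding char_poly_def cpBA by simp
  with 1 show ?thesis unfolding x_def by (simp add: x_pow_n monom_altdef)
qed

lemma order_linear_prod:
  "Polynomial.order x (\<Prod>a\<leftarrow>as. [:- a, 1:]) = count (mset as) (x::'a::idom)"
proof (induction as)
  case Nil then show ?case by (simp add: order_0I)
next
  case (Cons a as)
  have nz: "(\<Prod>a\<leftarrow>as. [:- a, 1:]) \<noteq> (0::'a poly)"
    by (auto simp: prod_list_zero_iff)
  have "Polynomial.order x ([:- a, 1:] * (\<Prod>a\<leftarrow>as. [:- a, 1:])) = Polynomial.order x [:- a, 1:] + Polynomial.order x (\<Prod>a\<leftarrow>as. [:- a, 1:])"
  proof (rule order_mult)
    have nz2: "[:- a, 1:] \<noteq> (0::'a poly)" by simp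
    show "[:- a, 1:] * (\<Prod>a\<leftarrow>as. [:- a, 1:]) \<noteq> 0" using nz nz2 mult_eq_0_iff by blast
  qed
  moreover have "Polynomial.order x [:- a, 1:] = (if x = a then 1 else 0)"
    using order_power_n_n[of a 1] by (auto simp: order_0I)
  ultimately show ?case using Cons by auto
qed

lemma sum_count_filter:
  assumes "finite S"
  shows "(\<Sum>x\<in>S. count (mset L) x) = length (filter (\<lambda>x. x \<in> S) L)"
proof (induction L)
  case Nil then show ?case by simp
next
  case (Cons a L)
  have "(\<Sum>x\<in>S. count (mset (a#L)) x) = (\<Sum>x\<in>S. count (mset L) x) + (\<Sum>x\<in>S. if a = x then 1 else 0)"
    by (subst sum.distrib[symmetric]) (rule sum.cong, auto)
  also have "(\<Sum>x\<in>S. if a = x then 1 else 0) = (if a \<in> S then 1 else (0::nat))"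
    using assms by (simp add: sum.delta)
  finally show ?case using Cons by simp
qed

lemma length_filter_mono:
  "(\<And>x. P x \<Longrightarrow> Q x) \<Longrightarrow> length (filter P xs) \<le> length (filter Q xs)"
  by (induction xs) auto

lemma shifted_count:
  fixes A :: "complex mat" and c :: real
  assumes A: "A \<in> carrier_mat N n" and B: "B \<in> carrier_mat n N" and c: "c > 0"
  shows "n_nonneg (A*B - complex_of_real c \<cdot>\<^sub>m 1\<^sub>m N) \<le> n"
proof -
  define G where "G = A*B"
  define cc where "cc = complex_of_real c"
  define M where "M = G - cc \<cdot>\<^sub>m 1\<^sub>m N"
  have G: "G \<in> carrier_mat N N" using A B by (auto simp: G_def)
  obtain es where es: "char_poly G = (\<Prod>a\<leftarrow>es. [:- a, 1:])" and les: "length es = N"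
    using char_poly_factorized[OF G] by blast
  obtain T P Q where sd: "schur_decomposition G es = (T,P,Q)" by (cases "schur_decomposition G es") auto
  from schur_decomposition[OF G es sd]
  have sim: "similar_mat_wit G T P Q" and ut: "upper_triangular T" and dT: "diag_mat T = es" by auto
  note W = similar_mat_witD2[OF G sim]
  define T' where "T' = T - cc \<cdot>\<^sub>m 1\<^sub>m N"
  have T: "T \<in> carrier_mat N N" using W by auto
  have T': "T' \<in> carrier_mat N N" using T by (auto simp: T'_def)
  have utT': "upper_triangular T'" using ut T unfolding T'_def upper_triangular_def by auto
  have dT': "diag_mat T' = map (\<lambda>e. e - cc) es"
    using dT T unfolding T'_def diag_mat_def by auto
  have "P * T' * Q = P * T * Q - cc \<cdot>\<^sub>m (P * Q)"
  proof -
    have "P * T' = P * T - P * (cc \<cdot>\<^sub>m 1\<^sub>m N)" unfolding T'_def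
      using W T by (subst mult_minus_distrib_mat[of _ N N]) auto
    also have "P * (cc \<cdot>\<^sub>m 1\<^sub>m N) = cc \<cdot>\<^sub>m P"
      using W by (subst mult_smult_distrib[of _ N N _ N]) auto
    finally have "P * T' * Q = (P * T - cc \<cdot>\<^sub>m P) * Q" by simp
    also have "\<dots> = P * T * Q - (cc \<cdot>\<^sub>m P) * Q"
      using W T by (subst minus_mult_distrib_mat[of _ N N]) auto
    also have "(cc \<cdot>\<^sub>m P) * Q = cc \<cdot>\<^sub>m (P * Q)"
      using W by (subst mult_smult_assoc_mat[of _ N N _ N]) auto
    finally show ?thesis .
  qed
  hence "M = P * T' * Q" using W unfolding M_def by simp
  hence "similar_mat_wit M T' P Q"
    using W T' G by (intro similar_mat_witI[of _ _ N]) (auto simp: M_def)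
  hence "char_poly M = char_poly T'" by (intro char_poly_similar) (auto simp: similar_mat_def)
  also have "\<dots> = (\<Prod>a\<leftarrow>map (\<lambda>e. e - cc) es. [:- a, 1:])"
    using char_poly_upper_triangular[OF T' utT'] dT' by simp
  finally have cM: "char_poly M = (\<Prod>a\<leftarrow>map (\<lambda>e. e - cc) es. [:- a, 1:])" .
  have "monom 1 n * char_poly G = monom 1 N * char_poly (B*A)"
    unfolding G_def by (rule sylvester_char_poly[OF A B])
  hence "Polynomial.order 0 (monom 1 n * char_poly G) = Polynomial.order 0 (monom 1 N * char_poly (B*A))" by simp
  moreover have "Polynomial.order 0 (monom 1 n * char_poly G) = n + Polynomial.order 0 (char_poly G)"
  proof -
    have nz: "char_poly G \<noteq> 0" using es by (auto simp: prod_list_zero_iff)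
    have "Polynomial.order 0 (monom (1::complex) n) = n"
      using order_power_n_n[of 0 n] by (simp add: monom_altdef x_pow_n)
    thus ?thesis using nz by (subst order_mult) (auto simp: monom_eq_0_iff)
  qed
  moreover have "Polynomial.order 0 (monom 1 N * char_poly (B*A)) \<ge> N"
  proof -
    have BA: "B*A \<in> carrier_mat n n" using A B by auto
    have nz: "char_poly (B*A) \<noteq> 0" using degree_monic_char_poly[OF BA] by auto
    have "Polynomial.order 0 (monom (1::complex) N) = N"
      using order_power_n_n[of 0 N] by (simp add: monom_altdef x_pow_n)
    thus ?thesis using nz by (subst order_mult) (auto simp: monom_eq_0_iff)
  qed
  ultimately have c0: "n + count (mset es) 0 \<ge> N" using es order_linear_prod by metis
  define S where "S = {x. poly (char_poly M) x = 0 \<and> x \<in> \<real> \<and> Re x \<ge> 0}"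
  have fin: "finite S"
  proof -
    have "char_poly M \<noteq> 0" unfolding cM by (auto simp: prod_list_zero_iff)
    hence "finite {x. poly (char_poly M) x = 0}" by (rule poly_roots_finite)
    thus ?thesis unfolding S_def by (rule rev_finite_subset) auto
  qed
  have "n_nonneg M = (\<Sum>x\<in>S. Polynomial.order x (char_poly M))"
    unfolding n_nonneg_def S_def ..
  also have "\<dots> = (\<Sum>x\<in>S. count (mset (map (\<lambda>e. e - cc) es)) x)"
    unfolding cM order_linear_prod ..
  also have "\<dots> = length (filter (\<lambda>x. x \<in> S) (map (\<lambda>e. e - cc) es))"
    by (rule sum_count_filter[OF fin])
  also have "\<dots> = length (filter (\<lambda>e. e - cc \<in> S) es)" by (simp add: filter_map o_def)
  also have "\<dots> \<le> length (filter (\<lambda>e. e \<noteq> 0) es)"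
  proof (rule length_filter_mono)
    fix e assume "e - cc \<in> S"
    hence "Re (e - cc) \<ge> 0" unfolding S_def by auto
    hence "Re e \<ge> c" unfolding cc_def by simp
    thus "e \<noteq> 0" using c by auto
  qed
  also have "\<dots> = N - count (mset es) 0"
  proof -
    have "count (mset xs) (0::complex) = length (filter (\<lambda>x. x = 0) xs)" for xs
      by (induction xs) auto
    thus ?thesis using sum_length_filter_compl[of "\<lambda>e. e \<noteq> 0" es] les by simp
  qed
  also have "\<dots> \<le> n" using c0 by simp
  finally show ?thesis unfolding M_def G_def cc_def .
qed

lemma sum_indic_Suc:
  assumes "X \<subseteq> {1..n}"
  shows "(\<Sum>i\<in>{0..<n}. (if Suc i \<in> X then 1 else 0)) = (of_nat (card X) :: complex)"
proof -
  have "(\<Sum>i\<in>{0..<n}. (if Suc i \<in> X then 1 else 0)) = (\<Sum>j\<in>Suc ` {0..<n}. (if j \<in> X then 1 else (0::complex)))"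
    by (subst sum.reindex) auto
  also have "Suc ` {0..<n} = {1..n}" by (auto simp: image_Suc_atLeastLessThan)
  also have "(\<Sum>j\<in>{1..n}. (if j \<in> X then 1 else (0::complex))) = (\<Sum>j\<in>{1..n} \<inter> X. 1)"
    by (subst sum.inter_restrict) auto
  also have "{1..n} \<inter> X = X" using assms by auto
  finally show ?thesis by simp
qed

lemma sum_indic_prod:
  fixes q :: complex
  assumes S: "S \<subseteq> {1..n}" and T: "T \<subseteq> {1..n}"
  shows "(\<Sum>i\<in>{0..<n}. (if Suc i \<in> S then 1 else 0) * ((if Suc i \<in> T then 1 else 0) - q))
        = of_nat (card (S \<inter> T)) - q * of_nat (card S)"
proof -
  have "(\<Sum>i\<in>{0..<n}. (if Suc i \<in> S then 1 else 0) * ((if Suc i \<in> T then 1 else 0) - q))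
     = (\<Sum>i\<in>{0..<n}. (if Suc i \<in> S \<inter> T then 1 else 0)) - q * (\<Sum>i\<in>{0..<n}. (if Suc i \<in> S then 1 else (0::complex)))"
    by (simp add: sum_subtractf[symmetric] sum_distrib_left, rule sum.cong) auto
  also have "\<dots> = of_nat (card (S \<inter> T)) - q * of_nat (card S)"
    using sum_indic_Suc[of "S \<inter> T" n] sum_indic_Suc[OF S] S by auto
  finally show ?thesis .
qed

theorem proposition3p4:
  fixes n k l :: nat
  assumes "0 < k" and "k < n" and "l \<le> k - 1"
  shows "n_nonneg_graph (johnson_vertices n k) (johnson_edge n k {l}) \<le> n"
proof -
  define V where "V = johnson_vertices n k"
  define N where "N = card V"
  define E where "E = vertex_enum V"
  have finV: "finite V" unfolding V_def johnson_vertices_def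
    by (rule finite_subset[of _ "Pow {1..n}"]) auto
  have "\<exists>xs. distinct xs \<and> set xs = V" using finite_distinct_list[OF finV] by blast
  hence dE: "distinct E" and sE: "set E = V" unfolding E_def vertex_enum_def by (metis (mono_tags, lifting) someI_ex)+
  have lE: "length E = N" unfolding N_def using dE sE distinct_card by fastforce
  have EV: "E ! a \<in> V" if "a < N" for a using that lE sE nth_mem by blast
  have Esub: "E ! a \<subseteq> {1..n}" and Ecard: "card (E ! a) = k" if "a < N" for a
    using EV[OF that] unfolding V_def johnson_vertices_def by auto
  define A :: "complex mat" where "A = mat N n (\<lambda>(a,i). if Suc i \<in> E ! a then 1 else 0)"
  define B :: "complex mat" where "B = mat n N (\<lambda>(i,b). (if Suc i \<in> E ! b then 1 else 0) - of_nat l / of_nat k)"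
  define c where "c = real (k - l)"
  define M where "M = A * B - complex_of_real c \<cdot>\<^sub>m 1\<^sub>m N"
  have A: "A \<in> carrier_mat N n" and B: "B \<in> carrier_mat n N" by (auto simp: A_def B_def)
  have c: "c > 0" unfolding c_def using assms by auto
  have AB: "(A * B) $$ (a, b) = of_nat (card (E ! a \<inter> E ! b)) - of_nat l" if "a < N" "b < N" for a b
  proof -
    have "(A * B) $$ (a, b) = (\<Sum>i\<in>{0..<n}. (if Suc i \<in> E ! a then 1 else 0) * ((if Suc i \<in> E ! b then 1 else 0) - of_nat l / of_nat k))"
      using that A B by (auto simp: A_def B_def scalar_prod_def intro!: sum.cong)
    also have "\<dots> = of_nat (card (E ! a \<inter> E ! b)) - (of_nat l / of_nat k) * of_nat (card (E ! a))"
      by (rule sum_indic_prod[OF Esub[OF that(1)] Esub[OF that(2)]])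
    also have "(of_nat l / of_nat k) * of_nat (card (E ! a)) = (of_nat l :: complex)"
      using Ecard[OF that(1)] assms(1) by simp
    finally show ?thesis .
  qed
  have Mij: "M $$ (a, b) = (if a = b then 0 else of_nat (card (E ! a \<inter> E ! b)) - of_nat l)" if "a < N" "b < N" for a b
  proof -
    have "M $$ (a, b) = (A * B) $$ (a, b) - (if a = b then complex_of_real c else 0)"
      using that A B by (auto simp: M_def)
    also have "\<dots> = (if a = b then 0 else of_nat (card (E ! a \<inter> E ! b)) - of_nat l)"
      using AB[OF that] Ecard[OF that(1)] assms unfolding c_def by (auto simp: of_nat_diff)
    finally show ?thesis .
  qed
  have M: "M \<in> carrier_mat N N" using A B by (auto simp: M_def)
  have wadj: "weighted_adj_matrix V (johnson_edge n k {l}) M"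
    unfolding weighted_adj_matrix_def
  proof (intro conjI allI impI)
    show "M \<in> carrier_mat (card V) (card V)" using M N_def by simp
    show "hermitian_mat M" unfolding hermitian_mat_def
    proof (intro conjI allI impI)
      show "dim_row M = dim_col M" using M by simp
      fix i j assume "i < dim_row M" "j < dim_row M"
      hence "i < N" "j < N" using M by auto
      then show "M $$ (i, j) = cnj (M $$ (j, i))" by (simp add: Mij Int_commute)
    qed
    fix i j assume i: "i < card V" and j: "j < card V" and nz: "M $$ (i, j) \<noteq> 0"
    hence "i \<noteq> j" "card (E ! i \<inter> E ! j) \<noteq> l" using Mij[of i j] N_def by (auto split: if_splits)
    moreover have "E ! i \<noteq> E ! j" using dE lE i j \<open>i \<noteq> j\<close> N_def nth_eq_iff_index_eq by metis
    ultimately show "johnson_edge n k {l} (vertex_enum V ! i) (vertex_enum V ! j)"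
      unfolding johnson_edge_def E_def[symmetric] V_def[symmetric] using EV i j N_def by auto
  qed
  have "n_nonneg M \<le> n" unfolding M_def by (rule shifted_count[OF A B c])
  moreover have "n_nonneg_graph V (johnson_edge n k {l}) \<le> n_nonneg M"
    unfolding n_nonneg_graph_def by (rule Least_le) (use wadj in blast)
  ultimately show ?thesis unfolding V_def by simp
qed

end
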